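(* Let $1<p\le2$, $T>0$, and let $\gamma_0,\gamma_1,\gamma_2,\gamma_3,\Lambda>0$ and $\theta\in(0,1]$ be given. Then there exist $\bar k\in(0,1]$, $\bar\gamma_0>0$ and $\gamma_4,\gamma_5>0$ (independent of $\lambda$) such that the following holds. Let $M\in\mathbb N$, $k=T/M\in(0,\bar k)$, $h\in(0,1/\sqrt{\gamma_0})$ with $h^2<\bar\gamma_0 k$, $\lambda\in[0,\Lambda]$, and let $(a_m)_{m=0}^M,(b_m)_{m=0}^M$ be non-negative sequences and $(r_m)_{m=0}^M,(s_m)_{m=0}^M$ sequences with $$a_0^2\le\gamma_0h^2,\quad b_0^2\le\gamma_0h^2,\quad k\sum_{m=0}^Mr_m^2\le\gamma_0h^2,\quad k\sum_{m=0}^Ms_m^2\le\gamma_0h^2,$$ and such that for all $1\le m\le M$ $$\frac{a_m^2-a_{m-1}^2}{k}+\gamma_1(\lambda+b_m)^{p-2}b_m^2\le b_mr_m+\gamma_2b_{m-1}b_m+s_m^2,$$ $$\frac{a_m^2-a_{m-1}^2}{k}+\gamma_1(\lambda+b_m)^{p-2}b_m^2\le b_mr_m+\gamma_3b_mb_{m-1}^{1-\theta}a_m^\theta+s_m^2.$$ Then $\max_{1\le m\le M}b_m\le1$ and $$\max_{1\le m\le M}a_m^2+\gamma_1(\lambda+\Lambda)^{p-2}\,k\sum_{m=1}^Mb_m^2\le\gamma_4h^2\exp(2\gamma_5kM).$$ *)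

theory Defs
  imports Complex_Main
begin

text \<open>Real power with the mathematical convention x^0 = 1 (also for x = 0);
  Isabelle's powr has 0 powr y = 0 for all y.\<close>
definition rpow :: "real \<Rightarrow> real \<Rightarrow> real" where
  "rpow x y = (if y = 0 then 1 else x powr y)"

end

theory Submission
  imports Defs
begin

lemma powY:
  fixes x y \<theta> \<delta> :: real
  assumes x: "0 \<le> x" and y: "0 \<le> y" and t: "0 < \<theta>" "\<theta> \<le> 1" and d: "\<delta> > 0"
  shows "rpow x (1-\<theta>) * rpow y \<theta> \<le> \<delta>*x + (\<delta> powr (1-1/\<theta>)) * y"
proof (cases "\<theta> = 1")
  case True
  then show ?thesis using x y d by (simp add: rpow_def)
next
  case False
  hence t1: "\<theta> < 1" using t by simp
  have r: "rpow x (1-\<theta>) * rpow y \<theta> = x powr (1-\<theta>) * y powr \<theta>"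
    using t t1 by (simp add: rpow_def)
  show ?thesis
  proof (cases "y \<le> \<delta> powr (1/\<theta>) * x")
    case True
    have "y powr \<theta> \<le> (\<delta> powr (1/\<theta>) * x) powr \<theta>"
      using True y t by (simp add: powr_mono2)
    also have "\<dots> = \<delta> * x powr \<theta>"
      using d x t by (simp add: powr_mult powr_powr)
    finally have h: "y powr \<theta> \<le> \<delta> * x powr \<theta>" .
    have "x powr (1-\<theta>) * y powr \<theta> \<le> x powr (1-\<theta>) * (\<delta> * x powr \<theta>)"
      using h by (simp add: mult_left_mono)
    also have "\<dots> \<le> \<delta> * x"
    proof (cases "x = 0")
      case True then show ?thesis by simp
    next
      case False
      then have "x powr (1-\<theta>) * x powr \<theta> = x" using x by (simp add: powr_add[symmetric])
      then show ?thesis by (metis mult.left_commute order_refl)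
    qed
    finally show ?thesis using r y d by (smt (verit) mult_nonneg_nonneg powr_ge_zero)
  next
    case False
    hence yp: "y > 0" using x d by (smt (verit) mult_nonneg_nonneg powr_ge_zero)
    have "x \<le> \<delta> powr (-1/\<theta>) * y"
    proof -
      have "\<delta> powr (1/\<theta>) * x < y" using False by simp
      hence "\<delta> powr (-1/\<theta>) * (\<delta> powr (1/\<theta>) * x) \<le> \<delta> powr (-1/\<theta>) * y" by (intro mult_left_mono) auto
      moreover have "\<delta> powr (-1/\<theta>) * \<delta> powr (1/\<theta>) = 1"
        using d by (simp add: powr_add[symmetric])
      ultimately show ?thesis by (simp add: mult.assoc[symmetric])
    qed
    hence "x powr (1-\<theta>) \<le> (\<delta> powr (-1/\<theta>) * y) powr (1-\<theta>)"
      using x t1 by (simp add: powr_mono2)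
    also have "\<dots> = \<delta> powr (1 - 1/\<theta>) * y powr (1-\<theta>)"
    proof -
      have e: "(-1/\<theta>)*(1-\<theta>) = 1 - 1/\<theta>" using t by (simp add: field_simps)
      show ?thesis using d y t e by (simp add: powr_mult powr_powr)
    qed
    finally have h: "x powr (1-\<theta>) \<le> \<delta> powr (1 - 1/\<theta>) * y powr (1-\<theta>)" .
    have "x powr (1-\<theta>) * y powr \<theta> \<le> \<delta> powr (1 - 1/\<theta>) * y powr (1-\<theta>) * y powr \<theta>"
      using h by (simp add: mult_right_mono)
    also have "\<dots> = \<delta> powr (1 - 1/\<theta>) * y"
      using yp by (simp add: mult.assoc powr_add[symmetric])
    finally show ?thesis using r x d by (smt (verit) mult_nonneg_nonneg)
  qed
qed
lemma coer1:
  fixes p lam L b g :: real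
  assumes "1 < p" "p \<le> 2" "0 \<le> lam" "lam \<le> L" "0 \<le> b" "b \<le> 1" "g > 0"
  shows "g * (L+1) powr (p-2) * b\<^sup>2 \<le> g * rpow (lam+b) (p-2) * b\<^sup>2"
proof (cases "b = 0")
  case True then show ?thesis by simp
next
  case False
  hence bp: "b > 0" using assms by simp
  have "(L+1) powr (p-2) \<le> rpow (lam+b) (p-2)"
  proof (cases "p = 2")
    case True then show ?thesis by (simp add: rpow_def)
  next
    case False
    then have "rpow (lam+b) (p-2) = (lam+b) powr (p-2)" by (simp add: rpow_def)
    moreover have "(L+1) powr (p-2) \<le> (lam+b) powr (p-2)"
      using assms bp by (intro powr_mono2') auto
    ultimately show ?thesis by simp
  qed
  then show ?thesis using assms by (intro mult_right_mono mult_left_mono) auto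
qed

lemma coer2:
  fixes p lam L b g :: real
  assumes "1 < p" "p \<le> 2" "0 \<le> lam" "lam \<le> L" "1 \<le> b" "g > 0"
  shows "g * (L+1) powr (p-2) * b \<le> g * rpow (lam+b) (p-2) * b\<^sup>2"
proof -
  have bp: "b > 0" using assms by simp
  have le: "lam + b \<le> (L+1) * b"
  proof -
    have "L*1 \<le> L*b" using assms by (intro mult_left_mono) auto
    thus ?thesis using assms by (simp add: algebra_simps)
  qed
  have "(L+1) powr (p-2) * b = (L+1) powr (p-2) * b powr (p-2) * b powr (1 - (p-2))"
    using bp by (simp add: mult.assoc powr_add[symmetric])
  also have "\<dots> \<le> (L+1) powr (p-2) * b powr (p-2) * b\<^sup>2"
  proof -
    have "b powr (1 - (p-2)) \<le> b powr 2" using assms by (intro powr_mono) auto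
    also have "\<dots> = b\<^sup>2" using bp by (simp add: powr_realpow)
    finally show ?thesis using bp assms by (intro mult_left_mono) auto
  qed
  also have "(L+1) powr (p-2) * b powr (p-2) = ((L+1)*b) powr (p-2)"
    using bp assms by (simp add: powr_mult)
  also have "((L+1)*b) powr (p-2) \<le> rpow (lam+b) (p-2)"
  proof (cases "p = 2")
    case True then show ?thesis by (simp add: rpow_def)
  next
    case False
    then have "rpow (lam+b) (p-2) = (lam+b) powr (p-2)" by (simp add: rpow_def)
    moreover have "((L+1)*b) powr (p-2) \<le> (lam+b) powr (p-2)"
      using assms bp le by (intro powr_mono2') auto
    ultimately show ?thesis by simp
  qed
  hence "((L+1)*b) powr (p-2) * b\<^sup>2 \<le> rpow (lam+b) (p-2) * b\<^sup>2" by (intro mult_right_mono) auto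
  finally show ?thesis using assms by (simp add: mult.assoc)
qed

lemma C1bound:
  fixes p lam L :: real
  assumes "1 < p" "p \<le> 2" "0 \<le> lam" "L > 0"
  shows "rpow (lam+L) (p-2) \<le> L powr (p-2)"
proof (cases "p = 2")
  case True then show ?thesis using assms by (simp add: rpow_def)
next
  case False
  then have "rpow (lam+L) (p-2) = (lam+L) powr (p-2)" by (simp add: rpow_def)
  moreover have "(lam+L) powr (p-2) \<le> L powr (p-2)"
    using assms by (intro powr_mono2') auto
  ultimately show ?thesis by simp
qed

lemma gronwall:
  fixes x :: "nat \<Rightarrow> real" and A q :: real
  assumes x: "\<And>j. 0 \<le> x j" and A: "0 \<le> A" and q: "0 \<le> q" "q \<le> 1/2"
    and h: "\<And>j. j \<in> {1..n} \<Longrightarrow> x j \<le> A + q * (\<Sum>i=1..j. x i)"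
  shows "j \<le> n \<Longrightarrow> A + q * (\<Sum>i=1..j. x i) \<le> A * exp (2*q*real j)"
proof -
  have P: "j \<le> n \<Longrightarrow> 2*A + 2*q*(\<Sum>i=1..j. x i) \<le> 2*A*(1+2*q)^j" for j
  proof (induction j)
    case 0 then show ?case by simp
  next
    case (Suc j)
    let ?S = "\<Sum>i=1..j. x i"
    have hj: "x (Suc j) \<le> A + q * (?S + x (Suc j))" using h[of "Suc j"] Suc.prems by simp
    have Sn: "0 \<le> ?S" using x by (simp add: sum_nonneg)
    have xs: "x (Suc j) \<le> 2*A + 2*q*?S"
    proof -
      have "(1-q) * x (Suc j) \<le> A + q*?S" using hj by (simp add: algebra_simps)
      moreover have "x (Suc j) \<le> 2 * ((1-q) * x (Suc j))"
      proof -
        have "2*q*x (Suc j) \<le> 1*x (Suc j)" using q x[of "Suc j"] by (intro mult_right_mono) auto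
        thus ?thesis by (simp add: algebra_simps)
      qed
      ultimately show ?thesis by linarith
    qed
    have IH: "2*A + 2*q*?S \<le> 2*A*(1+2*q)^j" using Suc by simp
    have "2*A + 2*q*(\<Sum>i=1..Suc j. x i) = (2*A + 2*q*?S) + 2*q*x (Suc j)" by (simp add: algebra_simps)
    also have "\<dots> \<le> (2*A + 2*q*?S) * (1+2*q)"
    proof -
      have "2*q*x (Suc j) \<le> 2*q*(2*A + 2*q*?S)" using xs q by (intro mult_left_mono) auto
      thus ?thesis by (simp add: algebra_simps)
    qed
    also have "\<dots> \<le> 2*A*(1+2*q)^j * (1+2*q)" using IH q by (intro mult_right_mono) auto
    finally show ?case by (simp add: algebra_simps)
  qed
  assume j: "j \<le> n"
  have "(1+2*q)^j \<le> exp (2*q)^j" using q by (intro power_mono) (auto simp: exp_ge_add_one_self)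
  also have "\<dots> = exp (2*q*real j)" by (simp add: exp_of_nat_mult[symmetric] mult.commute)
  finally have "2*A*(1+2*q)^j \<le> 2*A*exp (2*q*real j)" using A by (intro mult_left_mono) auto
  with P[OF j] show ?thesis by linarith
qed

lemma step2:
  fixes k c g3 dl K am am1 bm bm1 r s :: real
  assumes k: "k > 0" and c: "c > 0" and g3: "g3 > 0" and dl: "dl = c/(4*g3)"
    and hyp: "(am\<^sup>2 - am1\<^sup>2)/k + c*bm\<^sup>2 \<le> bm*r + g3*bm*(dl*bm1 + K*am) + s\<^sup>2"
  shows "am\<^sup>2 - am1\<^sup>2 + k*(c/2)*bm\<^sup>2 - k*(c/8)*bm1\<^sup>2 \<le> k*(2*(g3*K)\<^sup>2/c)*am\<^sup>2 + k*(r\<^sup>2/c + s\<^sup>2)"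
proof -
  have y1: "bm*r \<le> c/4*bm\<^sup>2 + r\<^sup>2/c"
  proof -
    have "0 \<le> (c*bm - 2*r)\<^sup>2" by simp
    hence "0 \<le> (c*bm - 2*r)\<^sup>2 / (4*c)" using c by simp
    also have "(c*bm - 2*r)\<^sup>2 / (4*c) = c/4*bm\<^sup>2 + r\<^sup>2/c - bm*r"
      using c by (simp add: field_simps power2_eq_square)
    finally show ?thesis by simp
  qed
  have y2: "g3*bm*(dl*bm1) \<le> c/8*bm\<^sup>2 + c/8*bm1\<^sup>2"
  proof -
    have gd: "g3*dl = c/4" using dl g3 by simp
    have "g3*bm*(dl*bm1) = (g3*dl)*(bm*bm1)" by (simp add: algebra_simps)
    hence "g3*bm*(dl*bm1) = c/4*(bm*bm1)" using gd by simp
    moreover have "c/4*(bm*bm1) \<le> c/4*((bm\<^sup>2 + bm1\<^sup>2)/2)"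
    proof (intro mult_left_mono)
      have "0 \<le> (bm - bm1)\<^sup>2" by simp
      thus "bm*bm1 \<le> (bm\<^sup>2 + bm1\<^sup>2)/2" by (simp add: power2_eq_square algebra_simps)
    qed (use c in simp)
    ultimately have "g3*bm*(dl*bm1) \<le> c/4*((bm\<^sup>2 + bm1\<^sup>2)/2)" by linarith
    also have "c/4*((bm\<^sup>2 + bm1\<^sup>2)/2) = c/8*bm\<^sup>2 + c/8*bm1\<^sup>2" by (simp add: field_simps)
    finally show ?thesis .
  qed
  have y3: "g3*bm*(K*am) \<le> c/8*bm\<^sup>2 + (2*(g3*K)\<^sup>2/c)*am\<^sup>2"
  proof -
    have "0 \<le> (c*bm - 4*g3*K*am)\<^sup>2" by simp
    hence "0 \<le> (c*bm - 4*g3*K*am)\<^sup>2 / (8*c)" using c by simp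
    also have "(c*bm - 4*g3*K*am)\<^sup>2 / (8*c) = c/8*bm\<^sup>2 + (2*(g3*K)\<^sup>2/c)*am\<^sup>2 - g3*bm*(K*am)"
      using c by (simp add: field_simps power2_eq_square)
    finally show ?thesis by simp
  qed
  have "(am\<^sup>2 - am1\<^sup>2)/k \<le> (2*(g3*K)\<^sup>2/c)*am\<^sup>2 + (r\<^sup>2/c + s\<^sup>2) - (c/2)*bm\<^sup>2 + (c/8)*bm1\<^sup>2"
    using hyp y1 y2 y3 by (simp add: algebra_simps)
  hence "k*((am\<^sup>2 - am1\<^sup>2)/k) \<le> k*((2*(g3*K)\<^sup>2/c)*am\<^sup>2 + (r\<^sup>2/c + s\<^sup>2) - (c/2)*bm\<^sup>2 + (c/8)*bm1\<^sup>2)"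
    using k by (intro mult_left_mono) auto
  moreover have e: "k*((am\<^sup>2 - am1\<^sup>2)/k) = am\<^sup>2 - am1\<^sup>2" using k by simp
  ultimately show ?thesis by (simp add: algebra_simps)
qed

lemma sumstep:
  fixes x y g :: "nat \<Rightarrow> real" and k c D :: real
  assumes h: "\<And>m. m \<in> {1..n} \<Longrightarrow> x m - x (m-1) + k*(c/2)*y m - k*(c/8)*y (m-1) \<le> k*D*x m + k*g m"
  shows "x n + k*(c/2)*(\<Sum>m=1..n. y m) - k*(c/8)*(\<Sum>m<n. y m) \<le> x 0 + k*D*(\<Sum>m=1..n. x m) + k*(\<Sum>m=1..n. g m)"
  using h
proof (induction n)
  case 0 then show ?case by simp
next
  case (Suc n)
  have IH: "x n + k*(c/2)*(\<Sum>m=1..n. y m) - k*(c/8)*(\<Sum>m<n. y m) \<le> x 0 + k*D*(\<Sum>m=1..n. x m) + k*(\<Sum>m=1..n. g m)"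
    using Suc by auto
  have st: "x (Suc n) - x n + k*(c/2)*y (Suc n) - k*(c/8)*y n \<le> k*D*x (Suc n) + k*g (Suc n)"
    using Suc.prems[of "Suc n"] by simp
  have s1: "(\<Sum>m=1..Suc n. y m) = (\<Sum>m=1..n. y m) + y (Suc n)" by simp
  have s2: "(\<Sum>m<Suc n. y m) = (\<Sum>m<n. y m) + y n" by simp
  have s3: "(\<Sum>m=1..Suc n. x m) = (\<Sum>m=1..n. x m) + x (Suc n)" by simp
  have s4: "(\<Sum>m=1..Suc n. g m) = (\<Sum>m=1..n. g m) + g (Suc n)" by simp
  show ?case unfolding s1 s2 s3 s4 using IH st by (simp add: distrib_left distrib_right)
qed

lemma lin3: fixes X Y Z W V :: real
  assumes "X + Y \<le> Z" "V \<le> Y" "- W \<le> X" shows "V \<le> Z + W"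
  using assms by linarith

lemma core:
  fixes p T \<gamma>0 \<gamma>1 \<gamma>2 \<gamma>3 \<Lambda> \<theta> c dl K D A E \<eta> \<epsilon> kbar C1 \<gamma>4 :: real
  assumes p: "1 < p" "p \<le> 2" and T: "T > 0"
    and g: "\<gamma>0 > 0" "\<gamma>1 > 0" "\<gamma>2 > 0" "\<gamma>3 > 0" and L: "\<Lambda> > 0"
    and th: "0 < \<theta>" "\<theta> \<le> 1"
    and c_def: "c = \<gamma>1 * (\<Lambda>+1) powr (p-2)"
    and dl_def: "dl = c/(4*\<gamma>3)" and K_def: "K = dl powr (1-1/\<theta>)"
    and D_def: "D = 2*(\<gamma>3*K)\<^sup>2/c"
    and A_def: "A = \<gamma>0*(2 + c/8 + 1/c)" and E_def: "E = exp (2*D*T)"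
    and eta_def: "\<eta> = min 1 (c/(4*\<gamma>2))"
    and eps_def: "\<epsilon> = min (min (c\<^sup>2/(16*\<gamma>0)) (\<eta>\<^sup>2/\<gamma>0)) (min (c/(4*(\<gamma>0 + A*E))) (3*c*\<eta>\<^sup>2/(8*A*E)))"
    and kbar_def: "kbar = min 1 (1/(2*D))"
    and C1_def: "C1 = \<gamma>1 * \<Lambda> powr (p-2)"
    and g4_def: "\<gamma>4 = (1 + 8*C1/(3*c))*A"
    and kM: "k = T / real M" and k0: "0 < k" and kb: "k < kbar"
    and h0: "0 < h" and hk: "h\<^sup>2 < \<epsilon> * k"
    and lam: "0 \<le> lam" "lam \<le> \<Lambda>"
    and nn: "\<forall>m\<in>{0..M}. 0 \<le> a m \<and> 0 \<le> b m"
    and a0: "(a 0)\<^sup>2 \<le> \<gamma>0 * h\<^sup>2" and b0: "(b 0)\<^sup>2 \<le> \<gamma>0 * h\<^sup>2"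
    and rs: "k * (\<Sum>m=0..M. (r m)\<^sup>2) \<le> \<gamma>0 * h\<^sup>2"
    and ss: "k * (\<Sum>m=0..M. (s m)\<^sup>2) \<le> \<gamma>0 * h\<^sup>2"
    and hyp1: "\<forall>m\<in>{1..M}.
         ((a m)\<^sup>2 - (a (m-1))\<^sup>2) / k + \<gamma>1 * rpow (lam + b m) (p - 2) * (b m)\<^sup>2
           \<le> b m * r m + \<gamma>2 * b (m-1) * b m + (s m)\<^sup>2"
    and hyp2: "\<forall>m\<in>{1..M}.
         ((a m)\<^sup>2 - (a (m-1))\<^sup>2) / k + \<gamma>1 * rpow (lam + b m) (p - 2) * (b m)\<^sup>2
           \<le> b m * r m + \<gamma>3 * b m * rpow (b (m-1)) (1 - \<theta>) * rpow (a m) \<theta> + (s m)\<^sup>2"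
  shows "Max (b ` {1..M}) \<le> 1 \<and>
      Max ((\<lambda>m. (a m)\<^sup>2) ` {1..M}) + \<gamma>1 * rpow (lam + \<Lambda>) (p - 2) * k * (\<Sum>m=1..M. (b m)\<^sup>2)
        \<le> \<gamma>4 * h\<^sup>2 * exp (2 * D * k * real M)"
proof -
  have c0: "c > 0" using c_def g L by simp
  have dl0: "dl > 0" using dl_def c0 g by simp
  have K0: "K > 0" using K_def dl0 by simp
  have D0: "D > 0" using D_def K0 g c0 by simp
  have A0: "A > 0" using A_def g c0 by (simp add: add_pos_pos)
  have E1: "E \<ge> 1" using E_def D0 T by simp
  have eta0: "\<eta> > 0" and eta1: "\<eta> \<le> 1" and eta2: "\<gamma>2 * \<eta> \<le> c/4"
    using eta_def c0 g by (auto simp: min_def field_simps)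
  have AE0: "A*E > 0" using A0 E1 by simp
  have e1: "\<epsilon> \<le> c\<^sup>2/(16*\<gamma>0)" and e2: "\<epsilon> \<le> \<eta>\<^sup>2/\<gamma>0"
    and e3: "\<epsilon> \<le> c/(4*(\<gamma>0 + A*E))" and e4: "\<epsilon> \<le> 3*c*\<eta>\<^sup>2/(8*A*E)"
    by (simp_all add: eps_def)
  have eps1: "\<gamma>0 * \<epsilon> \<le> c\<^sup>2/16" using e1 g by (simp add: field_simps)
  have eps2: "\<gamma>0 * \<epsilon> \<le> \<eta>\<^sup>2" using e2 g by (simp add: field_simps)
  have eps3: "(\<gamma>0 + A*E) * \<epsilon> \<le> c/4" using e3 g AE0 by (simp add: field_simps add_pos_pos)
  have eps4: "8*A*E*\<epsilon> \<le> 3*c*\<eta>\<^sup>2" using e4 g AE0 by (simp add: field_simps)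
  have M0: "M > 0" using kM k0 by (cases M) auto
  have kMT: "k * real M = T" using kM M0 by simp
  have k1: "k \<le> 1" using kb kbar_def by simp
  have kD: "k*D \<le> 1/2" using kb kbar_def D0 by (simp add: field_simps)
  have hke: "h\<^sup>2 / k \<le> \<epsilon>" using hk k0 by (simp add: field_simps)
  have h2: "h\<^sup>2 \<le> \<epsilon> * k" using hk by simp
  have rsub: "k * (\<Sum>m\<in>S. (r m)\<^sup>2) \<le> \<gamma>0 * h\<^sup>2" if "S \<subseteq> {0..M}" for S
  proof -
    have "(\<Sum>m\<in>S. (r m)\<^sup>2) \<le> (\<Sum>m=0..M. (r m)\<^sup>2)" using that by (intro sum_mono2) auto
    hence "k * (\<Sum>m\<in>S. (r m)\<^sup>2) \<le> k * (\<Sum>m=0..M. (r m)\<^sup>2)" using k0 by simp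
    thus ?thesis using rs by linarith
  qed
  have ssub: "k * (\<Sum>m\<in>S. (s m)\<^sup>2) \<le> \<gamma>0 * h\<^sup>2" if "S \<subseteq> {0..M}" for S
  proof -
    have "(\<Sum>m\<in>S. (s m)\<^sup>2) \<le> (\<Sum>m=0..M. (s m)\<^sup>2)" using that by (intro sum_mono2) auto
    hence "k * (\<Sum>m\<in>S. (s m)\<^sup>2) \<le> k * (\<Sum>m=0..M. (s m)\<^sup>2)" using k0 by simp
    thus ?thesis using ss by linarith
  qed
  have EN: "(a j)\<^sup>2 + k*(3*c/8)*(\<Sum>m=1..j. (b m)\<^sup>2) \<le> A*h\<^sup>2*exp (2*D*k*real j)"
    if nM: "n \<le> M" and bl: "\<forall>m\<in>{1..n}. b m \<le> 1" and jn: "j \<le> n" for n j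
  proof -
    define x where "x m = (a m)\<^sup>2" for m
    define y where "y m = (b m)\<^sup>2" for m
    define gg where "gg m = (r m)\<^sup>2/c + (s m)\<^sup>2" for m
    have x0: "0 \<le> x m" for m by (simp add: x_def)
    have y0: "0 \<le> y m" for m by (simp add: y_def)
    have st: "x m - x (m-1) + k*(c/2)*y m - k*(c/8)*y (m-1) \<le> k*D*x m + k*gg m"
      if m: "m \<in> {1..n}" for m
    proof -
      have mM: "m \<in> {1..M}" using m nM by auto
      have am: "0 \<le> a m" and bm: "0 \<le> b m" using nn mM by auto
      have bm1: "0 \<le> b (m-1)" using nn mM by auto
      have co: "c * (b m)\<^sup>2 \<le> \<gamma>1 * rpow (lam + b m) (p - 2) * (b m)\<^sup>2"
        using coer1[of p lam \<Lambda> "b m" \<gamma>1] p lam bm bl m g c_def by simp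
      have py: "rpow (b (m-1)) (1-\<theta>) * rpow (a m) \<theta> \<le> dl * b (m-1) + K * a m"
        using powY[OF bm1 am th dl0] K_def by simp
      have "\<gamma>3 * b m * rpow (b (m-1)) (1 - \<theta>) * rpow (a m) \<theta>
            = (\<gamma>3 * b m) * (rpow (b (m-1)) (1 - \<theta>) * rpow (a m) \<theta>)" by (simp add: mult.assoc)
      also have "\<dots> \<le> (\<gamma>3 * b m) * (dl * b (m-1) + K * a m)"
        using py g bm by (intro mult_left_mono) auto
      finally have t: "\<gamma>3 * b m * rpow (b (m-1)) (1 - \<theta>) * rpow (a m) \<theta> \<le> \<gamma>3 * b m * (dl * b (m-1) + K * a m)" .
      have "((a m)\<^sup>2 - (a (m-1))\<^sup>2)/k + c*(b m)\<^sup>2 \<le> b m * r m + \<gamma>3 * b m * (dl * b (m-1) + K * a m) + (s m)\<^sup>2"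
        using hyp2 mM co t by fastforce
      from step2[OF k0 c0 g(4) dl_def this] show ?thesis
        by (simp add: x_def y_def gg_def D_def algebra_simps)
    qed
    have sumj: "x i + k*(3*c/8)*(\<Sum>m=1..i. y m) \<le> A*h\<^sup>2 + (k*D)*(\<Sum>m=1..i. x m)" if iN: "i \<le> n" for i
    proof -
      have S: "x i + k*(c/2)*(\<Sum>m=1..i. y m) - k*(c/8)*(\<Sum>m<i. y m) \<le> x 0 + k*D*(\<Sum>m=1..i. x m) + k*(\<Sum>m=1..i. gg m)"
        by (rule sumstep) (use st iN in auto)
      have "(\<Sum>m<i. y m) \<le> (\<Sum>m\<in>insert 0 {1..i}. y m)" using y0 by (intro sum_mono2) auto
      also have "\<dots> = y 0 + (\<Sum>m=1..i. y m)" by simp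
      finally have Y: "(\<Sum>m<i. y m) \<le> y 0 + (\<Sum>m=1..i. y m)" .
      have "k*(c/8)*(\<Sum>m<i. y m) \<le> k*(c/8)*(y 0 + (\<Sum>m=1..i. y m))"
        using Y k0 c0 by (intro mult_left_mono) auto
      moreover have "k*(c/8)*y 0 \<le> (c/8)*(\<gamma>0*h\<^sup>2)"
      proof -
        have "k*y 0 \<le> 1 * y 0" using k1 y0 by (intro mult_right_mono) auto
        also have "\<dots> \<le> \<gamma>0*h\<^sup>2" using b0 by (simp add: y_def)
        finally have "k*y 0 \<le> \<gamma>0*h\<^sup>2" .
        hence "(c/8)*(k*y 0) \<le> (c/8)*(\<gamma>0*h\<^sup>2)" using c0 by (intro mult_left_mono) auto
        thus ?thesis by (simp add: algebra_simps)
      qed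
      moreover have "k*(\<Sum>m=1..i. gg m) \<le> \<gamma>0*h\<^sup>2/c + \<gamma>0*h\<^sup>2"
      proof -
        have "k*(\<Sum>m=1..i. gg m) = (k*(\<Sum>m=1..i. (r m)\<^sup>2))/c + k*(\<Sum>m=1..i. (s m)\<^sup>2)"
          by (simp add: gg_def sum.distrib sum_divide_distrib[symmetric] algebra_simps)
        moreover have "k*(\<Sum>m=1..i. (r m)\<^sup>2) \<le> \<gamma>0*h\<^sup>2" using rsub[of "{1..i}"] iN nM by auto
        hence "k*(\<Sum>m=1..i. (r m)\<^sup>2)/c \<le> \<gamma>0*h\<^sup>2/c" using c0 by (simp add: divide_right_mono)
        moreover have "k*(\<Sum>m=1..i. (s m)\<^sup>2) \<le> \<gamma>0*h\<^sup>2" using ssub[of "{1..i}"] iN nM by auto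
        ultimately show ?thesis by linarith
      qed
      moreover have "x 0 \<le> \<gamma>0*h\<^sup>2" using a0 by (simp add: x_def)
      moreover have "A*h\<^sup>2 = \<gamma>0*h\<^sup>2*2 + (c/8)*(\<gamma>0*h\<^sup>2) + \<gamma>0*h\<^sup>2/c"
        unfolding A_def using c0 by (simp add: field_simps)
      ultimately show ?thesis using S by (simp add: algebra_simps)
    qed
    have G: "A*h\<^sup>2 + (k*D)*(\<Sum>m=1..j. x m) \<le> A*h\<^sup>2 * exp (2*(k*D)*real j)"
    proof (rule gronwall[OF x0 _ _ kD _ jn])
      show "0 \<le> A*h\<^sup>2" using A0 by simp
      show "0 \<le> k*D" using k0 D0 by simp
      fix i assume "i \<in> {1..n}"
      hence "x i + k*(3*c/8)*(\<Sum>m=1..i. y m) \<le> A*h\<^sup>2 + (k*D)*(\<Sum>m=1..i. x m)" using sumj by auto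
      moreover have "0 \<le> k*(3*c/8)*(\<Sum>m=1..i. y m)" using k0 c0 y0 by (simp add: sum_nonneg)
      ultimately show "x i \<le> A*h\<^sup>2 + (k*D)*(\<Sum>m=1..i. x m)" by linarith
    qed
    have ex: "exp (2*(k*D)*real j) = exp (2*D*k*real j)" by (simp add: algebra_simps)
    have "x j + k*(3*c/8)*(\<Sum>m=1..j. y m) \<le> A*h\<^sup>2 * exp (2*(k*D)*real j)"
      using sumj[OF jn] G by linarith
    thus ?thesis unfolding ex by (simp add: x_def y_def)
  qed
  have expb: "exp (2*D*k*real j) \<le> E" if "j \<le> M" for j
  proof -
    have "k*real j \<le> k*real M" using that k0 by (intro mult_left_mono) auto
    hence "2*D*(k*real j) \<le> 2*D*(k*real M)" by (rule mult_left_mono) (use D0 in auto)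
    hence "2*D*k*real j \<le> 2*D*T" using kMT by (simp add: mult.assoc)
    thus ?thesis using E_def by simp
  qed
  have eps0: "\<epsilon> > 0"
  proof -
    have "0 < h\<^sup>2" using h0 by simp
    hence "0 < \<epsilon> * k" using hk by linarith
    thus ?thesis using k0 by (simp add: zero_less_mult_iff)
  qed
  have b0eta: "b 0 \<le> \<eta>"
  proof -
    have t1: "\<gamma>0 * h\<^sup>2 \<le> \<gamma>0 * (\<epsilon> * k)" using h2 g by (intro mult_left_mono) auto
    have t2: "\<epsilon> * k \<le> \<epsilon> * 1" by (rule mult_left_mono[OF k1]) (use eps0 in simp)
    have t3: "\<gamma>0 * (\<epsilon> * k) \<le> \<gamma>0 * (\<epsilon> * 1)" by (rule mult_left_mono[OF t2]) (use g in simp)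
    have "(b 0)\<^sup>2 \<le> \<eta>\<^sup>2" using b0 eps2 t1 t3 by linarith
    thus ?thesis by (rule power2_le_imp_le) (use eta0 in simp)
  qed
  have B: "n \<le> M \<Longrightarrow> \<forall>m\<in>{1..n}. b m \<le> \<eta>" for n
  proof (induction n)
    case 0 then show ?case by simp
  next
    case (Suc n)
    have IH: "\<forall>m\<in>{1..n}. b m \<le> \<eta>" using Suc by simp
    have bl: "\<forall>m\<in>{1..n}. b m \<le> 1" using IH eta1 by force
    have bn: "b n \<le> \<eta>" using IH b0eta by (cases n) auto
    have bn0: "0 \<le> b n" using nn Suc.prems by auto
    define \<beta> where "\<beta> = b (Suc n)"
    have be0: "0 \<le> \<beta>" using nn Suc.prems by (auto simp: \<beta>_def)
    have xn: "(a n)\<^sup>2 \<le> A*h\<^sup>2*E"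
    proof -
      have "(a n)\<^sup>2 + k*(3*c/8)*(\<Sum>m=1..n. (b m)\<^sup>2) \<le> A*h\<^sup>2*exp (2*D*k*real n)"
        using EN[of n n] Suc.prems bl by simp
      moreover have "0 \<le> k*(3*c/8)*(\<Sum>m=1..n. (b m)\<^sup>2)" using k0 c0 by (simp add: sum_nonneg)
      moreover have "A*h\<^sup>2*exp (2*D*k*real n) \<le> A*h\<^sup>2*E"
        using expb[of n] Suc.prems A0 by (intro mult_left_mono) auto
      ultimately show ?thesis by linarith
    qed
    have xnk: "(a n)\<^sup>2/k \<le> A*E*\<epsilon>"
    proof -
      have "(a n)\<^sup>2/k \<le> A*h\<^sup>2*E/k" using xn k0 by (simp add: divide_right_mono)
      also have "\<dots> = A*E*(h\<^sup>2/k)" by simp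
      also have "\<dots> \<le> A*E*\<epsilon>" using hke AE0 by (intro mult_left_mono) auto
      finally show ?thesis .
    qed
    have sM: "Suc n \<in> {1..M}" using Suc.prems by simp
    have rsq: "(r (Suc n))\<^sup>2 \<le> \<gamma>0 * \<epsilon>"
    proof -
      have "k*(r (Suc n))\<^sup>2 \<le> \<gamma>0*h\<^sup>2" using rsub[of "{Suc n}"] Suc.prems by simp
      also have "\<dots> \<le> \<gamma>0*(\<epsilon>*k)" using h2 g by (intro mult_left_mono) auto
      finally have "k*(r (Suc n))\<^sup>2 \<le> k*(\<gamma>0*\<epsilon>)" by (simp add: algebra_simps)
      thus ?thesis using k0 by simp
    qed
    have ssq: "(s (Suc n))\<^sup>2 \<le> \<gamma>0 * \<epsilon>"
    proof -
      have "k*(s (Suc n))\<^sup>2 \<le> \<gamma>0*h\<^sup>2" using ssub[of "{Suc n}"] Suc.prems by simp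
      also have "\<dots> \<le> \<gamma>0*(\<epsilon>*k)" using h2 g by (intro mult_left_mono) auto
      finally have "k*(s (Suc n))\<^sup>2 \<le> k*(\<gamma>0*\<epsilon>)" by (simp add: algebra_simps)
      thus ?thesis using k0 by simp
    qed
    have rabs: "\<bar>r (Suc n)\<bar> \<le> c/4"
    proof -
      have "(r (Suc n))\<^sup>2 \<le> (c/4)\<^sup>2" using rsq eps1 by (simp add: power_divide)
      thus ?thesis using c0 by (simp add: abs_le_square_iff[symmetric])
    qed
    have be1: "\<beta> \<le> 1"
    proof (rule ccontr)
      assume "\<not> \<beta> \<le> 1"
      hence bg: "\<beta> > 1" by simp
      have h1: "((a (Suc n))\<^sup>2 - (a n)\<^sup>2) / k + \<gamma>1 * rpow (lam + \<beta>) (p - 2) * \<beta>\<^sup>2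
           \<le> \<beta> * r (Suc n) + \<gamma>2 * b n * \<beta> + (s (Suc n))\<^sup>2"
        using bspec[OF hyp1 sM] unfolding \<beta>_def by simp
      have co: "c * \<beta> \<le> \<gamma>1 * rpow (lam + \<beta>) (p - 2) * \<beta>\<^sup>2"
        using coer2[of p lam \<Lambda> \<beta> \<gamma>1] p lam bg g c_def by simp
      have d: "((a (Suc n))\<^sup>2 - (a n)\<^sup>2) / k \<ge> - ((a n)\<^sup>2/k)"
        using k0 by (simp add: diff_divide_distrib)
      have t1: "\<beta> * r (Suc n) \<le> \<beta> * (c/4)"
      proof -
        have "\<beta> * r (Suc n) \<le> \<beta> * \<bar>r (Suc n)\<bar>" using be0 by (intro mult_left_mono) auto
        also have "\<dots> \<le> \<beta> * (c/4)" using rabs be0 by (intro mult_left_mono) auto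
        finally show ?thesis .
      qed
      have t2: "\<gamma>2 * b n * \<beta> \<le> (c/4) * \<beta>"
      proof -
        have "\<gamma>2 * b n \<le> \<gamma>2 * \<eta>" using bn g by (intro mult_left_mono) auto
        hence "\<gamma>2 * b n \<le> c/4" using eta2 by linarith
        thus ?thesis using be0 by (intro mult_right_mono) auto
      qed
      have e1: "c * \<beta> \<le> \<beta> * r (Suc n) + \<gamma>2 * b n * \<beta> + (s (Suc n))\<^sup>2 + (a n)\<^sup>2/k"
        by (rule lin3[OF h1 co d])
      have "c * \<beta> \<le> A*E*\<epsilon> + \<gamma>0*\<epsilon> + (\<beta> * (c/4) + (c/4) * \<beta>)"
        using e1 t1 t2 xnk ssq by linarith
      moreover have "A*E*\<epsilon> + \<gamma>0*\<epsilon> \<le> c/4" using eps3 by (simp add: algebra_simps)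
      moreover have "c/4 < c*\<beta>/4" using c0 bg by simp
      moreover have "\<beta> * (c/4) + (c/4) * \<beta> = c*\<beta>/2" by simp
      moreover have "0 < c*\<beta>" using c0 bg by simp
      ultimately show False by linarith
    qed
    have bl': "\<forall>m\<in>{1..Suc n}. b m \<le> 1" using bl be1 by (auto simp: \<beta>_def le_Suc_eq)
    have "\<beta>\<^sup>2 \<le> \<eta>\<^sup>2"
    proof -
      have "(a (Suc n))\<^sup>2 + k*(3*c/8)*(\<Sum>m=1..Suc n. (b m)\<^sup>2) \<le> A*h\<^sup>2*exp (2*D*k*real (Suc n))"
        using EN[of "Suc n" "Suc n"] Suc.prems bl' by simp
      moreover have "A*h\<^sup>2*exp (2*D*k*real (Suc n)) \<le> A*h\<^sup>2*E"
        using expb[of "Suc n"] Suc.prems A0 by (intro mult_left_mono) auto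
      moreover have "\<beta>\<^sup>2 \<le> (\<Sum>m=1..Suc n. (b m)\<^sup>2)"
        unfolding \<beta>_def by (rule member_le_sum) auto
      hence "k*(3*c/8)*\<beta>\<^sup>2 \<le> k*(3*c/8)*(\<Sum>m=1..Suc n. (b m)\<^sup>2)" using k0 c0 by (intro mult_left_mono) auto
      moreover have "0 \<le> (a (Suc n))\<^sup>2" by simp
      ultimately have "k*(3*c/8)*\<beta>\<^sup>2 \<le> A*h\<^sup>2*E" by linarith
      also have "A*h\<^sup>2*E \<le> A*(\<epsilon>*k)*E" using h2 AE0 A0 E1 by (intro mult_right_mono mult_left_mono) auto
      finally have "k*(3*c*\<beta>\<^sup>2) \<le> k*(8*A*E*\<epsilon>)" by (simp add: algebra_simps)
      hence "3*c*\<beta>\<^sup>2 \<le> 8*A*E*\<epsilon>" using k0 by simp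
      hence "3*c*\<beta>\<^sup>2 \<le> 3*c*\<eta>\<^sup>2" using eps4 by linarith
      thus ?thesis using c0 by simp
    qed
    hence "\<beta> \<le> \<eta>" by (rule power2_le_imp_le) (use eta0 in simp)
    thus ?case using IH by (auto simp: \<beta>_def le_Suc_eq)
  qed
  have ball: "\<forall>m\<in>{1..M}. b m \<le> \<eta>" using B[of M] by simp
  have blM: "\<forall>m\<in>{1..M}. b m \<le> 1" using ball eta1 by force
  have ne: "{1..M} \<noteq> {}" using M0 by simp
  have part1: "Max (b ` {1..M}) \<le> 1" using blM ne by (subst Max_le_iff) auto
  define W where "W = A*h\<^sup>2*exp (2*D*k*real M)"
  have amax: "Max ((\<lambda>m. (a m)\<^sup>2) ` {1..M}) \<le> W"
  proof (subst Max_le_iff)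
    show "\<forall>x\<in>(\<lambda>m. (a m)\<^sup>2) ` {1..M}. x \<le> W"
    proof
      fix x assume "x \<in> (\<lambda>m. (a m)\<^sup>2) ` {1..M}"
      then obtain j where j: "j \<in> {1..M}" and xj: "x = (a j)\<^sup>2" by auto
      have "(a j)\<^sup>2 + k*(3*c/8)*(\<Sum>m=1..j. (b m)\<^sup>2) \<le> A*h\<^sup>2*exp (2*D*k*real j)"
        using EN[of M j] j blM by simp
      moreover have "0 \<le> k*(3*c/8)*(\<Sum>m=1..j. (b m)\<^sup>2)" using k0 c0 by (simp add: sum_nonneg)
      moreover have "exp (2*D*k*real j) \<le> exp (2*D*k*real M)"
      proof -
        have "k*real j \<le> k*real M" using j k0 by (intro mult_left_mono) auto
        hence "2*D*(k*real j) \<le> 2*D*(k*real M)" by (rule mult_left_mono) (use D0 in auto)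
        thus ?thesis by (simp add: mult.assoc)
      qed
      hence "A*h\<^sup>2*exp (2*D*k*real j) \<le> W" unfolding W_def using A0 by (intro mult_left_mono) auto
      ultimately show "x \<le> W" using xj by linarith
    qed
  qed (use ne in auto)
  have sumb: "k*(\<Sum>m=1..M. (b m)\<^sup>2) \<le> 8*W/(3*c)"
  proof -
    have "(a M)\<^sup>2 + k*(3*c/8)*(\<Sum>m=1..M. (b m)\<^sup>2) \<le> W"
      using EN[of M M] blM unfolding W_def by simp
    moreover have "0 \<le> (a M)\<^sup>2" by simp
    ultimately have "k*(3*c/8)*(\<Sum>m=1..M. (b m)\<^sup>2) \<le> W" by linarith
    hence "(3*c)*(k*(\<Sum>m=1..M. (b m)\<^sup>2)) \<le> 8*W" by (simp add: algebra_simps)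
    thus ?thesis using c0 by (simp add: field_simps)
  qed
  have C10: "0 \<le> C1" using C1_def g by simp
  have gr: "\<gamma>1 * rpow (lam + \<Lambda>) (p - 2) \<le> C1"
    using C1bound[OF p lam(1) L] g C1_def by simp
  have ksb0: "0 \<le> k*(\<Sum>m=1..M. (b m)\<^sup>2)" using k0 by (simp add: sum_nonneg)
  have "\<gamma>1 * rpow (lam + \<Lambda>) (p - 2) * k * (\<Sum>m=1..M. (b m)\<^sup>2)
        = (\<gamma>1 * rpow (lam + \<Lambda>) (p - 2)) * (k * (\<Sum>m=1..M. (b m)\<^sup>2))" by (simp add: mult.assoc)
  also have "\<dots> \<le> C1 * (k * (\<Sum>m=1..M. (b m)\<^sup>2))" using gr ksb0 by (intro mult_right_mono) auto
  also have "\<dots> \<le> C1 * (8*W/(3*c))" using sumb C10 by (intro mult_left_mono) auto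
  finally have part2: "\<gamma>1 * rpow (lam + \<Lambda>) (p - 2) * k * (\<Sum>m=1..M. (b m)\<^sup>2) \<le> C1 * (8*W/(3*c))" .
  have "W + C1 * (8*W/(3*c)) = \<gamma>4 * h\<^sup>2 * exp (2 * D * k * real M)"
    unfolding W_def g4_def using c0 by (simp add: field_simps)
  with part1 amax part2 show ?thesis by linarith
qed

theorem lemma2:
  fixes p T \<gamma>0 \<gamma>1 \<gamma>2 \<gamma>3 \<Lambda> \<theta> :: real
  assumes "1 < p" "p \<le> 2" "T > 0"
    and "\<gamma>0 > 0" "\<gamma>1 > 0" "\<gamma>2 > 0" "\<gamma>3 > 0" "\<Lambda> > 0"
    and "0 < \<theta>" "\<theta> \<le> 1"
  shows "\<exists>kbar \<gamma>0bar \<gamma>4 \<gamma>5 :: real.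
    0 < kbar \<and> kbar \<le> 1 \<and> \<gamma>0bar > 0 \<and> \<gamma>4 > 0 \<and> \<gamma>5 > 0 \<and>
    (\<forall>(M::nat) k h lam (a::nat \<Rightarrow> real) (b::nat \<Rightarrow> real) (r::nat \<Rightarrow> real) (s::nat \<Rightarrow> real).
      k = T / real M \<and> 0 < k \<and> k < kbar \<and>
      0 < h \<and> h < 1 / sqrt \<gamma>0 \<and> h\<^sup>2 < \<gamma>0bar * k \<and>
      0 \<le> lam \<and> lam \<le> \<Lambda> \<and>
      (\<forall>m\<in>{0..M}. 0 \<le> a m \<and> 0 \<le> b m) \<and>
      (a 0)\<^sup>2 \<le> \<gamma>0 * h\<^sup>2 \<and> (b 0)\<^sup>2 \<le> \<gamma>0 * h\<^sup>2 \<and>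
      k * (\<Sum>m=0..M. (r m)\<^sup>2) \<le> \<gamma>0 * h\<^sup>2 \<and>
      k * (\<Sum>m=0..M. (s m)\<^sup>2) \<le> \<gamma>0 * h\<^sup>2 \<and>
      (\<forall>m\<in>{1..M}.
         ((a m)\<^sup>2 - (a (m-1))\<^sup>2) / k + \<gamma>1 * rpow (lam + b m) (p - 2) * (b m)\<^sup>2
           \<le> b m * r m + \<gamma>2 * b (m-1) * b m + (s m)\<^sup>2) \<and>
      (\<forall>m\<in>{1..M}.
         ((a m)\<^sup>2 - (a (m-1))\<^sup>2) / k + \<gamma>1 * rpow (lam + b m) (p - 2) * (b m)\<^sup>2
           \<le> b m * r m + \<gamma>3 * b m * rpow (b (m-1)) (1 - \<theta>) * rpow (a m) \<theta> + (s m)\<^sup>2)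
      \<longrightarrow>
      Max (b ` {1..M}) \<le> 1 \<and>
      Max ((\<lambda>m. (a m)\<^sup>2) ` {1..M}) + \<gamma>1 * rpow (lam + \<Lambda>) (p - 2) * k * (\<Sum>m=1..M. (b m)\<^sup>2)
        \<le> \<gamma>4 * h\<^sup>2 * exp (2 * \<gamma>5 * k * real M))"
proof -
  define c where "c = \<gamma>1 * (\<Lambda>+1) powr (p-2)"
  define dl where "dl = c/(4*\<gamma>3)"
  define K where "K = dl powr (1-1/\<theta>)"
  define D where "D = 2*(\<gamma>3*K)\<^sup>2/c"
  define A where "A = \<gamma>0*(2 + c/8 + 1/c)"
  define E where "E = exp (2*D*T)"
  define \<eta> where "\<eta> = min 1 (c/(4*\<gamma>2))"
  define \<epsilon> where "\<epsilon> = min (min (c\<^sup>2/(16*\<gamma>0)) (\<eta>\<^sup>2/\<gamma>0)) (min (c/(4*(\<gamma>0 + A*E))) (3*c*\<eta>\<^sup>2/(8*A*E)))"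
  define kbar where "kbar = min 1 (1/(2*D))"
  define C1 where "C1 = \<gamma>1 * \<Lambda> powr (p-2)"
  define \<gamma>4 where "\<gamma>4 = (1 + 8*C1/(3*c))*A"
  have c0: "c > 0" using c_def assms by simp
  have dl0: "dl > 0" using dl_def c0 assms by simp
  have K0: "K > 0" using K_def dl0 by simp
  have D0: "D > 0" using D_def K0 assms c0 by simp
  have A0: "A > 0" using A_def assms c0 by (simp add: add_pos_pos)
  have E0: "E > 0" using E_def by simp
  have eta0: "\<eta> > 0" using \<eta>_def c0 assms by simp
  have AE0: "A*E > 0" using A0 E0 by simp
  have "\<gamma>0 + A*E > 0" using AE0 assms by simp
  hence eps0: "\<epsilon> > 0" unfolding \<epsilon>_def using c0 eta0 AE0 assms by simp
  have kb0: "kbar > 0" and kb1: "kbar \<le> 1" using kbar_def D0 by auto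
  have C10: "C1 \<ge> 0" using C1_def assms by simp
  have g40: "\<gamma>4 > 0" using \<gamma>4_def C10 c0 A0 by (simp add: add_pos_nonneg)
  show ?thesis
    apply (rule exI[of _ kbar], rule exI[of _ \<epsilon>], rule exI[of _ \<gamma>4], rule exI[of _ D])
    apply (intro conjI)
         apply (rule kb0)
        apply (rule kb1)
       apply (rule eps0)
      apply (rule g40)
     apply (rule D0)
    apply (intro allI impI)
    apply (elim conjE)
    subgoal for M k h lam a b r s
      by (rule core[OF assms c_def dl_def K_def D_def A_def E_def \<eta>_def \<epsilon>_def kbar_def C1_def \<gamma>4_def,
            where M=M and k=k and h=h and lam=lam and a=a and b=b and r=r and s=s]) assumption+
    done
qed

end
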